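(* For all $n\ge0$ and complex parameters, with the convention $E_{n,k}=0$ if $k<0$, $k>n$ or $n<0$: (i) $E_{n,k}(a,b;c_0+a,c_\infty-a)=E_{n,k}+an\,(E_{n-1,k}-E_{n-1,k-1})$, where every number on the right has parameters $(a,b;c_0,c_\infty)$, for $0\le k\le n$; (ii) $E_{n,k}(a,b;c_0+b,-c_0)=E_{n,k+1}(a,b;c_0,b-c_0)+(-1)^k(c_0)^{\underline n,a}\binom{n+1}{k+1}$ for $-1\le k\le n$; (iii) $c_\infty\,E_{n,k}(a,b;b-a,c_\infty+a)=E_{n+1,k+1}(a,b;0,c_\infty)$ for $-1\le k\le n$; (iv) $c_0\,E_{n,k}(a,b;c_0-a,a+b)=E_{n+1,k}(a,b;c_0,0)$ for $0\le k\le n$; (v) $c\,[E_{n,k+1}(a,b;c-a,a-c)-E_{n,k}(a,b;c-a,a-c)]=E_{n+1,k+1}(a,b;c,-c)$ for $-1\le k\le n$.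
   Context: Generalized Eulerian numbers $E_{n,k}(a,b;c_0,c_\infty)$: defined by $E_{0,0}=1$, $E_{n,k}=0$ if $n<0$, $k<0$ or $k>n$, and $E_{n+1,k+1}=[-an+b(k+1)+c_0]E_{n,k+1}+[(a+b)n-bk+c_\infty]E_{n,k}$ for $n\ge0$, $k\in\mathbb Z$. $(x)^{\underline n,a}=\prod_{i=0}^{n-1}(x-ia)$. *)

theory Defs
  imports Complex_Main
begin

fun EulN :: "complex \<Rightarrow> complex \<Rightarrow> complex \<Rightarrow> complex \<Rightarrow> nat \<Rightarrow> int \<Rightarrow> complex" where
  "EulN a b c0 ci 0 k = (if k = 0 then 1 else 0)"
| "EulN a b c0 ci (Suc n) k =
     (if k < 0 \<or> k > int (Suc n) then 0 else
        (- a * of_nat n + b * of_int k + c0) * EulN a b c0 ci n k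
      + ((a + b) * of_nat n - b * of_int (k - 1) + ci) * EulN a b c0 ci n (k - 1))"

definition GEuler :: "complex \<Rightarrow> complex \<Rightarrow> complex \<Rightarrow> complex \<Rightarrow> int \<Rightarrow> int \<Rightarrow> complex" where
  "GEuler a b c0 ci n k = (if n < 0 then 0 else EulN a b c0 ci (nat n) k)"

definition gffact :: "complex \<Rightarrow> complex \<Rightarrow> nat \<Rightarrow> complex" where
  "gffact a x n = (\<Prod>i<n. x - of_nat i * a)"

end

theory Submission
  imports Defs
begin

lemma EulN_out: "k < 0 \<or> k > int n \<Longrightarrow> EulN a b c0 ci n k = 0"
  by (induction n arbitrary: k) auto

lemma EulN_rec: "EulN a b c0 ci (Suc n) k =
  (- a * of_nat n + b * of_int k + c0) * EulN a b c0 ci n k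
      + ((a + b) * of_nat n - b * of_int (k - 1) + ci) * EulN a b c0 ci n (k - 1)"
  using EulN_out[of k n a b c0 ci] EulN_out[of "k-1" n a b c0 ci] by auto

declare EulN.simps(2)[simp del]

lemma partI: "EulN a b (c0 + a) (ci - a) n k
   = EulN a b c0 ci n k + a * of_nat n * (EulN a b c0 ci (n - 1) k - EulN a b c0 ci (n - 1) (k - 1))"
proof (induction n arbitrary: k)
  case 0 then show ?case by simp
next
  case (Suc n)
  note IH1 = Suc.IH[of k] and IH2 = Suc.IH[of "k-1"]
  show ?case
  proof (cases n)
    case 0
    then show ?thesis using IH1 IH2 by (simp add: EulN_rec algebra_simps)
  next
    case (Suc m)
    have IH1': "EulN a b (c0+a) (ci-a) (Suc m) k = EulN a b c0 ci (Suc m) k + a*of_nat (Suc m)*(EulN a b c0 ci m k - EulN a b c0 ci m (k-1))"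
      using IH1 Suc by simp
    have IH2': "EulN a b (c0+a) (ci-a) (Suc m) (k-1) = EulN a b c0 ci (Suc m) (k-1) + a*of_nat (Suc m)*(EulN a b c0 ci m (k-1) - EulN a b c0 ci m (k-1-1))"
      using IH2 Suc by simp
    show ?thesis
      unfolding Suc
      apply (simp only: EulN_rec[of a b "c0+a" "ci-a" "Suc m"] EulN_rec[of a b c0 ci "Suc m"] IH1' IH2')
      apply (simp only: diff_Suc_1 EulN_rec[of a b c0 ci m])
      apply (simp add: algebra_simps of_nat_Suc)
      done
  qed
qed

lemma partIV: "c0 * EulN a b (c0 - a) (a + b) n k = EulN a b c0 0 (Suc n) k"
proof (induction n arbitrary: k)
  case 0 then show ?case by (simp add: EulN_rec)
next
  case (Suc n)
  show ?case
    apply (simp only: EulN_rec[of a b c0 0 "Suc n"] EulN_rec[of a b "c0-a" "a+b" n] Suc.IH[symmetric])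
    apply (simp add: algebra_simps of_nat_Suc)
    done
qed

lemma partIII: "ci * EulN a b (b - a) (ci + a) n k = EulN a b 0 ci (Suc n) (k + 1)"
proof (induction n arbitrary: k)
  case 0 then show ?case by (cases "k = -1") (auto simp: EulN_rec)
next
  case (Suc n)
  have h: "EulN a b 0 ci (Suc n) k = ci * EulN a b (b - a) (ci + a) n (k - 1)"
    using Suc.IH[of "k-1"] by simp
  show ?case
    apply (simp only: EulN_rec[of a b 0 ci "Suc n"] EulN_rec[of a b "b-a" "ci+a" n] Suc.IH[symmetric])
    apply (simp add: h)
    apply (simp add: algebra_simps of_nat_Suc)
    done
qed

lemma partV: "c * (EulN a b (c - a) (a - c) n (k + 1) - EulN a b (c - a) (a - c) n k) = EulN a b c (- c) (Suc n) (k + 1)"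
proof (induction n arbitrary: k)
  case 0 then show ?case by (cases "k = -1") (auto simp: EulN_rec)
next
  case (Suc n)
  have h: "EulN a b c (-c) (Suc n) k = c * (EulN a b (c - a) (a - c) n k - EulN a b (c - a) (a - c) n (k - 1))"
    using Suc.IH[of "k-1"] by simp
  show ?case
    apply (simp only: EulN_rec[of a b c "-c" "Suc n"] EulN_rec[of a b "c-a" "a-c" n] Suc.IH[symmetric])
    apply (simp add: h)
    apply (simp add: algebra_simps of_nat_Suc)
    done
qed

definition Dt :: "complex \<Rightarrow> complex \<Rightarrow> nat \<Rightarrow> int \<Rightarrow> complex" where
  "Dt a c0 n k = (if k < -1 then 0 else (-1) powi k * gffact a c0 n * of_nat ((n+1) choose nat (k+1)))"

lemma gffact_Suc: "gffact a c0 (Suc n) = gffact a c0 n * (c0 - of_nat n * a)"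
  by (simp add: gffact_def)

lemma choose_aux: "Suc j * (N choose Suc j) = (N - j) * (N choose j)"
proof (cases N)
  case 0 then show ?thesis by (cases j) auto
next
  case (Suc M)
  then show ?thesis using Suc_times_binomial[of j M] binomial_absorb_comp[of "Suc M" j] by simp
qed

lemma Drec: "Dt a c0 (Suc n) k = (- a * of_nat n + b * (of_int k + 1) + c0) * Dt a c0 n k
   + ((a + b) * of_nat n - b * of_int k + b - c0) * Dt a c0 n (k - 1)"
proof -
  consider "k < -1" | "k = -1" | "k = 0" | i where "k = int (Suc i)" 
  proof (cases "k > 0")
    case True
    then have "k = int (Suc (nat (k-1)))" by simp
    then show ?thesis by (rule that(4))
  next
    case False
    then have "k < -1 \<or> k = -1 \<or> k = 0" by linarith
    then show ?thesis using that(1-3) by blast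
  qed
  then show ?thesis
  proof cases
    case 1 then show ?thesis by (simp add: Dt_def)
  next
    case 2 then show ?thesis by (simp add: Dt_def gffact_Suc algebra_simps)
  next
    case 3 then show ?thesis by (simp add: Dt_def gffact_Suc algebra_simps of_nat_Suc)
  next
    case 4
    have pk: "(-1::complex) powi k = - ((-1) ^ i)" unfolding 4 power_int_of_nat by simp
    have pk1: "(-1::complex) powi (k - 1) = (-1) ^ i"
    proof -
      have "k - 1 = int i" using 4 by simp
      then show ?thesis by simp
    qed
    have nk: "nat (k+1) = Suc (Suc i)" "nat (k - 1 + 1) = Suc i" using 4 by auto
    show ?thesis
    proof (cases "i \<le> n")
      case True
      have h0: "Suc (Suc i) * (Suc n choose Suc (Suc i)) = (Suc n - Suc i) * (Suc n choose Suc i)"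
        by (rule choose_aux)
      have h: "(of_nat i + 2) * (of_nat (Suc n choose Suc (Suc i)) :: complex) = (of_nat n - of_nat i) * of_nat (Suc n choose Suc i)"
      proof -
        have h1: "(of_nat (Suc (Suc i)) * of_nat (Suc n choose Suc (Suc i)) :: complex) = of_nat (n - i) * of_nat (Suc n choose Suc i)"
          using arg_cong[OF h0, of "of_nat :: nat \<Rightarrow> complex"] by (simp only: of_nat_mult diff_Suc_Suc)
        then show ?thesis using True by (simp del: binomial_Suc_Suc add: of_nat_diff algebra_simps)
      qed
      define C1 where "C1 = (of_nat (Suc n choose Suc i) :: complex)"
      define C2 where "C2 = (of_nat (Suc n choose Suc (Suc i)) :: complex)"
      define P where "P = gffact a c0 n"
      have c2: "C2 = (of_nat n - of_nat i) * C1 / (of_nat i + 2)"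
      proof -
        have "(of_nat i + 2 :: complex) \<noteq> 0"
        proof -
          have "(of_nat (i+2)::complex) \<noteq> 0" by (simp only: of_nat_eq_0_iff)
          then show ?thesis by (simp add: add.commute)
        qed
        then show ?thesis using h unfolding C1_def C2_def by (simp add: field_simps)
      qed
      have kk: "(of_int k :: complex) = of_nat i + 1" using 4 by simp
      have d1: "Dt a c0 (Suc n) k = - ((-1)^i) * (P * (c0 - of_nat n * a)) * (C1 + C2)"
        unfolding Dt_def C1_def C2_def P_def using 4 pk nk by (simp add: gffact_Suc)
      have d2: "Dt a c0 n k = - ((-1)^i) * P * C2"
        unfolding Dt_def C1_def C2_def P_def using 4 pk nk by simp
      have d3: "Dt a c0 n (k - 1) = (-1)^i * P * C1"
        unfolding Dt_def C1_def C2_def P_def using 4 pk1 nk by simp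
      have ne: "(of_nat i + 2 :: complex) \<noteq> 0"
      proof -
        have "(of_nat (i+2)::complex) \<noteq> 0" by (simp only: of_nat_eq_0_iff)
        then show ?thesis by (simp add: add.commute)
      qed
      show ?thesis
        unfolding d1 d2 d3 kk c2 using ne
        by (simp add: field_simps)
    next
      case False
      then show ?thesis unfolding Dt_def using 4 nk by (simp add: binomial_eq_0)
    qed
  qed
qed

lemma partII: "EulN a b (c0 + b) (- c0) n k = EulN a b c0 (b - c0) n (k + 1) + Dt a c0 n k"
proof (induction n arbitrary: k)
  case 0
  consider "k < -1" | "k = -1" | "k = 0" | "k > 0" by linarith
  then show ?case by cases (auto simp: Dt_def gffact_def)
next
  case (Suc n)
  have h: "EulN a b (c0 + b) (- c0) n (k - 1) = EulN a b c0 (b - c0) n k + Dt a c0 n (k - 1)"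
    using Suc.IH[of "k-1"] by simp
  show ?case
    apply (simp only: EulN_rec[of a b "c0+b" "-c0" n] EulN_rec[of a b c0 "b-c0" n] Drec[of a c0 n k b] Suc.IH h)
    apply (simp add: algebra_simps)
    done
qed

theorem mainTheorem16:
  fixes a b c0 ci c :: complex and n :: nat
  shows
   "(\<forall>k::int. 0 \<le> k \<and> k \<le> int n \<longrightarrow>
      GEuler a b (c0 + a) (ci - a) (int n) k
      = GEuler a b c0 ci (int n) k
        + a * of_nat n * (GEuler a b c0 ci (int n - 1) k - GEuler a b c0 ci (int n - 1) (k - 1)))
  \<and> (\<forall>k::int. -1 \<le> k \<and> k \<le> int n \<longrightarrow>
      GEuler a b (c0 + b) (- c0) (int n) k
      = GEuler a b c0 (b - c0) (int n) (k + 1)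
        + (-1) powi k * gffact a c0 n * of_nat ((n + 1) choose nat (k + 1)))
  \<and> (\<forall>k::int. -1 \<le> k \<and> k \<le> int n \<longrightarrow>
      ci * GEuler a b (b - a) (ci + a) (int n) k = GEuler a b 0 ci (int n + 1) (k + 1))
  \<and> (\<forall>k::int. 0 \<le> k \<and> k \<le> int n \<longrightarrow>
      c0 * GEuler a b (c0 - a) (a + b) (int n) k = GEuler a b c0 0 (int n + 1) k)
  \<and> (\<forall>k::int. -1 \<le> k \<and> k \<le> int n \<longrightarrow>
      c * (GEuler a b (c - a) (a - c) (int n) (k + 1) - GEuler a b (c - a) (a - c) (int n) k)
      = GEuler a b c (- c) (int n + 1) (k + 1))"
proof -
  have g1: "GEuler a b x y (int m) j = EulN a b x y m j" for x y m j by (simp add: GEuler_def)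
  have g2: "GEuler a b x y (int m + 1) j = EulN a b x y (Suc m) j" for x y m j
    by (simp add: GEuler_def nat_add_distrib)
  have g3: "GEuler a b x y (int m - 1) j = (if m = 0 then 0 else EulN a b x y (m - 1) j)" for x y m j
    by (simp add: GEuler_def nat_diff_distrib)
  show ?thesis
    unfolding g1 g2 g3
  proof (intro conjI allI impI)
    fix k :: int
    show "EulN a b (c0 + a) (ci - a) n k = EulN a b c0 ci n k + a * of_nat n *
      ((if n = 0 then 0 else EulN a b c0 ci (n - 1) k) - (if n = 0 then 0 else EulN a b c0 ci (n - 1) (k - 1)))"
      using partI[of a b c0 ci n k] by (cases "n = 0") simp_all
  next
    fix k :: int assume "-1 \<le> k \<and> k \<le> int n"
    then show "EulN a b (c0 + b) (- c0) n k = EulN a b c0 (b - c0) n (k + 1)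
      + (-1) powi k * gffact a c0 n * of_nat ((n + 1) choose nat (k + 1))"
      using partII[of a b c0 n k] unfolding Dt_def by simp
  next
    fix k :: int
    show "ci * EulN a b (b - a) (ci + a) n k = EulN a b 0 ci (Suc n) (k + 1)"
      by (rule partIII)
  next
    fix k :: int
    show "c0 * EulN a b (c0 - a) (a + b) n k = EulN a b c0 0 (Suc n) k"
      by (rule partIV)
  next
    fix k :: int
    show "c * (EulN a b (c - a) (a - c) n (k + 1) - EulN a b (c - a) (a - c) n k) = EulN a b c (- c) (Suc n) (k + 1)"
      by (rule partV)
  qed
qed

end
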